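(* For every $k\ge 1$, the bi-hypergraph obtained from $\mathcal H_{2k}$ by adding a new vertex $v$ and the edges $\{v,v_{1,j},v_{2k,j+1}\}$ for all $j\in[3]$ is minimal uncolorable.
   Context: A bi-hypergraph $\mathcal H=(V,E)$ consists of a finite vertex set $V$ and a set $E$ of subsets of $V$, called edges, with no edge contained in another. A mapping $f:V\to\mathbb N$ is a proper coloring of $\mathcal H$ if $1<|f(e)|<|e|$ for every $e\in E$, where $f(e)=\{f(v):v\in e\}$. $\mathcal H$ is colorable if it has a proper coloring, and uncolorable otherwise. A subhypergraph of $\mathcal H$ is a bi-hypergraph $(V',E')$ with $V'\subseteq V$, $E'\subseteq E$; $\mathcal H$ is minimal uncolorable if it is uncolorable but every proper subhypergraph of it is colorable. For $k\ge 2$, $\mathcal H_k$ is the $3$-uniform bi-hypergraph with vertex set $\{v_{i,j}: i\in[k], j\in[3]\}$ (all distinct), with the convention $v_{i,4}=v_{i,1}$, $v_{i,5}=v_{i,2}$, whose edges are the sets $\{v_{i,1},v_{i,2},v_{i,3}\}$ for all $i\in[k]$ and the sets $\{v_{q+1,j},v_{q,j},v_{q,j+t}\}$ for all $q\in[k-1]$, $j\in[3]$, $t\in\{1,2\}$. *)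

theory Defs
  imports Main
begin

definition bihypergraph :: "'a set \<times> 'a set set \<Rightarrow> bool" where
  "bihypergraph H \<longleftrightarrow> finite (fst H) \<and> (\<forall>e\<in>snd H. e \<subseteq> fst H)
     \<and> (\<forall>e\<in>snd H. \<forall>e'\<in>snd H. e \<subseteq> e' \<longrightarrow> e = e')"

definition proper_coloring :: "'a set \<times> 'a set set \<Rightarrow> ('a \<Rightarrow> nat) \<Rightarrow> bool" where
  "proper_coloring H f \<longleftrightarrow> (\<forall>e\<in>snd H. 1 < card (f ` e) \<and> card (f ` e) < card e)"

definition colorable :: "'a set \<times> 'a set set \<Rightarrow> bool" where
  "colorable H \<longleftrightarrow> (\<exists>f. proper_coloring H f)"

definition subhypergraph :: "'a set \<times> 'a set set \<Rightarrow> 'a set \<times> 'a set set \<Rightarrow> bool" where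
  "subhypergraph H' H \<longleftrightarrow> bihypergraph H' \<and> fst H' \<subseteq> fst H \<and> snd H' \<subseteq> snd H"

definition minimal_uncolorable :: "'a set \<times> 'a set set \<Rightarrow> bool" where
  "minimal_uncolorable H \<longleftrightarrow> bihypergraph H \<and> \<not> colorable H
     \<and> (\<forall>H'. subhypergraph H' H \<and> H' \<noteq> H \<longrightarrow> colorable H')"

text \<open>Vertices: Some (i,j) is v_{i,j}; None is the extra vertex v.
  Second index taken cyclically in [3]: v_{i,4}=v_{i,1}, v_{i,5}=v_{i,2}.\<close>
definition vx :: "nat \<Rightarrow> nat \<Rightarrow> (nat \<times> nat) option" where
  "vx i j = Some (i, (j - 1) mod 3 + 1)"

definition Hk :: "nat \<Rightarrow> (nat \<times> nat) option set \<times> (nat \<times> nat) option set set" where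
  "Hk k = ({vx i j | i j. i \<in> {1..k} \<and> j \<in> {1..3}},
           {{vx i 1, vx i 2, vx i 3} | i. i \<in> {1..k}}
           \<union> {{vx (q+1) j, vx q j, vx q (j+t)} | q j t. q \<in> {1..k-1} \<and> j \<in> {1..3} \<and> t \<in> {1,2}})"

definition Hk_ext :: "nat \<Rightarrow> (nat \<times> nat) option set \<times> (nat \<times> nat) option set set" where
  "Hk_ext k = (insert None (fst (Hk k)),
               snd (Hk k) \<union> {{None, vx 1 j, vx k (j+1)} | j. j \<in> {1..3}})"

end

theory Submission
  imports Defs
begin



lemma vx_simps[simp]: "vx i 1 = Some(i,1)" "vx i 2 = Some(i,2)" "vx i 3 = Some(i,3)"
  "vx i 4 = Some(i,1)" "vx i 5 = Some(i,2)" "vx i (Suc 0) = Some(i,1)"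
  by (simp_all add: vx_def)

lemma j3E: "(j::nat) \<in> {1..3} \<Longrightarrow> (j = 1 \<Longrightarrow> P) \<Longrightarrow> (j = 2 \<Longrightarrow> P) \<Longrightarrow> (j = 3 \<Longrightarrow> P) \<Longrightarrow> P"
  by (cases j; cases "j - 1"; cases "j - 2"; auto)

lemma snd_Hk: "snd (Hk_ext n) =
   {{vx i 1, vx i 2, vx i 3} | i. i \<in> {1..n}}
   \<union> {{vx (q+1) j, vx q j, vx q (j+t)} | q j t. q \<in> {1..n-1} \<and> j \<in> {1..3} \<and> t \<in> {1,2}}
   \<union> {{None, vx 1 j, vx n (j+1)} | j. j \<in> {1..3}}"
  unfolding Hk_ext_def Hk_def by simp

definition Iset :: "nat \<Rightarrow> (nat\<times>nat) option set \<Rightarrow> bool" where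
  "Iset q e \<longleftrightarrow> e = {Some(q+1,1),Some(q,1),Some(q,2)} \<or> e = {Some(q+1,1),Some(q,1),Some(q,3)} \<or>
       e = {Some(q+1,2),Some(q,2),Some(q,3)} \<or> e = {Some(q+1,2),Some(q,2),Some(q,1)} \<or>
       e = {Some(q+1,3),Some(q,3),Some(q,1)} \<or> e = {Some(q+1,3),Some(q,3),Some(q,2)}"

lemma edges_iff:
  assumes n1: "n \<ge> 1"
  shows "e \<in> snd (Hk_ext n) \<longleftrightarrow>
   (\<exists>i. 1 \<le> i \<and> i \<le> n \<and> e = {Some(i,1),Some(i,2),Some(i,3)}) \<or>
   (\<exists>q. 1 \<le> q \<and> q+1 \<le> n \<and> Iset q e) \<or>
   e = {None, Some(1,1), Some(n,2)} \<or> e = {None, Some(1,2), Some(n,3)} \<or> e = {None, Some(1,3), Some(n,1)}"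
proof
  assume "e \<in> snd (Hk_ext n)"
  then have "(\<exists>i. e = {vx i 1, vx i 2, vx i 3} \<and> i \<in> {1..n}) \<or>
     (\<exists>q j t. e = {vx (q+1) j, vx q j, vx q (j+t)} \<and> q \<in> {1..n-1} \<and> j \<in> {1..3} \<and> t \<in> {1,2}) \<or>
     (\<exists>j. e = {None, vx 1 j, vx n (j+1)} \<and> j \<in> {1..3})"
    unfolding snd_Hk by (simp only: Un_iff mem_Collect_eq disj_assoc)
  then show "(\<exists>i. 1 \<le> i \<and> i \<le> n \<and> e = {Some(i,1),Some(i,2),Some(i,3)}) \<or>
   (\<exists>q. 1 \<le> q \<and> q+1 \<le> n \<and> Iset q e) \<or>
   e = {None, Some(1,1), Some(n,2)} \<or> e = {None, Some(1,2), Some(n,3)} \<or> e = {None, Some(1,3), Some(n,1)}"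
  proof (elim disjE exE conjE)
    fix i assume "e = {vx i 1, vx i 2, vx i 3}" "i \<in> {1..n}" then show ?thesis by (intro disjI1 exI[of _ i]) simp
  next
    fix q j t assume I: "e = {vx (q+1) j, vx q j, vx q (j+t)}" "q \<in> {1..n-1}" "j \<in> {1..3}" "t \<in> {1,2}"
    have q: "1 \<le> q" "q+1 \<le> n" using I(2) n1 by auto
    have "Iset q e" using I(3)
    proof (rule j3E)
      assume j: "j = 1"
      from I(4) have "t = 1 \<or> t = 2" by simp
      then show "Iset q e" by (elim disjE; simp add: Iset_def I(1) j vx_def numeral_2_eq_2[symmetric] numeral_3_eq_3[symmetric])
    next
      assume j: "j = 2"
      from I(4) have "t = 1 \<or> t = 2" by simp
      then show "Iset q e" by (elim disjE; simp add: Iset_def I(1) j vx_def numeral_2_eq_2[symmetric] numeral_3_eq_3[symmetric])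
    next
      assume j: "j = 3"
      from I(4) have "t = 1 \<or> t = 2" by simp
      then show "Iset q e" by (elim disjE; simp add: Iset_def I(1) j vx_def numeral_2_eq_2[symmetric] numeral_3_eq_3[symmetric])
    qed
    then show ?thesis using q by blast
  next
    fix j assume N: "e = {None, vx 1 j, vx n (j+1)}" "j \<in> {1..3}"
    show ?thesis using N(2) by (rule j3E; use N(1) in \<open>simp add: vx_def numeral_2_eq_2[symmetric] numeral_3_eq_3[symmetric]\<close>)
  qed
next
  assume h: "(\<exists>i. 1 \<le> i \<and> i \<le> n \<and> e = {Some(i,1),Some(i,2),Some(i,3)}) \<or>
   (\<exists>q. 1 \<le> q \<and> q+1 \<le> n \<and> Iset q e) \<or>
   e = {None, Some(1,1), Some(n,2)} \<or> e = {None, Some(1,2), Some(n,3)} \<or> e = {None, Some(1,3), Some(n,1)}"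
  have IN: "e \<in> snd (Hk_ext n)"
    if "1 \<le> q" "q + 1 \<le> n" "e = {vx (q+1) j, vx q j, vx q (j+t)}" "j \<in> {1..3}" "t \<in> {1,2}" for q j t
  proof -
    have "q \<in> {1..n-1}" using that(1,2) by auto
    then show ?thesis unfolding snd_Hk mem_Collect_eq Un_iff
      by (intro disjI1 disjI2 exI[of _ q] exI[of _ j] exI[of _ t] conjI that(3-5))
  qed
  have NN: "e \<in> snd (Hk_ext n)"
    if "e = {None, vx 1 j, vx n (j+1)}" "j \<in> {1..3}" for j
    unfolding snd_Hk mem_Collect_eq Un_iff by (intro disjI2 exI[of _ j] conjI that)
  from h show "e \<in> snd (Hk_ext n)"
  proof (elim disjE exE conjE)
    fix i assume "1 \<le> i" "i \<le> n" "e = {Some (i, 1), Some (i, 2), Some (i, 3)}"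
    then show ?thesis unfolding snd_Hk by (intro UnI1 CollectI exI[of _ i]) simp
  next
    fix q assume q: "1 \<le> q" "q + 1 \<le> n" "Iset q e"
    from q(3) show ?thesis unfolding Iset_def
    proof (elim disjE)
      assume "e = {Some (q + 1, 1), Some (q, 1), Some (q, 2)}" then show ?thesis by (intro IN[OF q(1,2), of 1 1]) (simp_all add: vx_def numeral_2_eq_2[symmetric] numeral_3_eq_3[symmetric])
    next
      assume "e = {Some (q + 1, 1), Some (q, 1), Some (q, 3)}" then show ?thesis by (intro IN[OF q(1,2), of 1 2]) (simp_all add: vx_def numeral_2_eq_2[symmetric] numeral_3_eq_3[symmetric])
    next
      assume "e = {Some (q + 1, 2), Some (q, 2), Some (q, 3)}" then show ?thesis by (intro IN[OF q(1,2), of 2 1]) (simp_all add: vx_def numeral_2_eq_2[symmetric] numeral_3_eq_3[symmetric])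
    next
      assume "e = {Some (q + 1, 2), Some (q, 2), Some (q, 1)}" then show ?thesis by (intro IN[OF q(1,2), of 2 2]) (simp_all add: vx_def numeral_2_eq_2[symmetric] numeral_3_eq_3[symmetric])
    next
      assume "e = {Some (q + 1, 3), Some (q, 3), Some (q, 1)}" then show ?thesis by (intro IN[OF q(1,2), of 3 1]) (simp_all add: vx_def numeral_2_eq_2[symmetric] numeral_3_eq_3[symmetric])
    next
      assume "e = {Some (q + 1, 3), Some (q, 3), Some (q, 2)}" then show ?thesis by (intro IN[OF q(1,2), of 3 2]) (simp_all add: vx_def numeral_2_eq_2[symmetric] numeral_3_eq_3[symmetric])
    qed
  next
    assume "e = {None, Some (1, 1), Some (n, 2)}" then show ?thesis by (intro NN[of 1]) (simp_all add: vx_def numeral_2_eq_2[symmetric] numeral_3_eq_3[symmetric])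
  next
    assume "e = {None, Some (1, 2), Some (n, 3)}" then show ?thesis by (intro NN[of 2]) (simp_all add: vx_def numeral_2_eq_2[symmetric] numeral_3_eq_3[symmetric])
  next
    assume "e = {None, Some (1, 3), Some (n, 1)}" then show ?thesis by (intro NN[of 3]) (simp_all add: vx_def numeral_2_eq_2[symmetric] numeral_3_eq_3[symmetric])
  qed
qed




definition good2 :: "nat \<Rightarrow> nat \<Rightarrow> nat \<Rightarrow> bool" where
  "good2 a b c \<longleftrightarrow> (a = b \<or> b = c \<or> a = c) \<and> \<not> (a = b \<and> b = c)"

definition okE :: "('a \<Rightarrow> nat) \<Rightarrow> 'a set \<Rightarrow> bool" where
  "okE f e \<longleftrightarrow> 1 < card (f ` e) \<and> card (f ` e) < card e"

lemma card3_iff: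
  assumes "x \<noteq> y" "y \<noteq> z" "x \<noteq> z"
  shows "okE f {x,y,z} \<longleftrightarrow> good2 (f x) (f y) (f z)"
  using assms unfolding okE_def good2_def by (auto simp: card_insert_if)

lemma card3_nec:
  assumes "okE f {x,y,z}"
  shows "good2 (f x) (f y) (f z)"
  using assms unfolding okE_def good2_def by (auto simp: card_insert_if split: if_splits)

lemma memT: assumes "1 \<le> i" "i \<le> n" shows "{Some(i,1),Some(i,2),Some(i,3)} \<in> snd (Hk_ext n)"
proof -
  have n: "1 \<le> n" using assms by simp
  show ?thesis unfolding edges_iff[OF n] by (intro disjI1 exI[of _ i] conjI assms refl)
qed

lemma memI: assumes "1 \<le> q" "q+1 \<le> n" "Iset q e" shows "e \<in> snd (Hk_ext n)"
proof -
  have n: "1 \<le> n" using assms by simp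
  show ?thesis unfolding edges_iff[OF n] by (intro disjI2[OF disjI1] exI[of _ q] conjI assms)
qed

lemma memN: assumes "1 \<le> n"
  shows "{None, Some(1,1), Some(n,2)} \<in> snd (Hk_ext n)"
   "{None, Some(1,2), Some(n,3)} \<in> snd (Hk_ext n)"
   "{None, Some(1,3), Some(n,1)} \<in> snd (Hk_ext n)"
  using assms by (subst edges_iff, simp, simp)+


definition pat :: "(nat \<Rightarrow> nat \<Rightarrow> nat) \<Rightarrow> nat \<Rightarrow> nat \<Rightarrow> nat \<Rightarrow> nat \<Rightarrow> bool" where
  "pat g i r a b \<longleftrightarrow> a \<noteq> b \<and> (r = 1 \<or> r = 2 \<or> r = 3) \<and>
     g i 1 = (if r = 1 then b else a) \<and> g i 2 = (if r = 2 then b else a) \<and> g i 3 = (if r = 3 then b else a)"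

lemma pat_ex: "good2 (g i 1) (g i 2) (g i 3) \<Longrightarrow> \<exists>r a b. pat g i r a b"
proof -
  assume h: "good2 (g i 1) (g i 2) (g i 3)"
  show ?thesis
  proof (cases "g i 1 = g i 2")
    case True
    then have "pat g i 3 (g i 1) (g i 3)" using h unfolding good2_def pat_def by auto
    then show ?thesis by blast
  next
    case False
    show ?thesis
    proof (cases "g i 2 = g i 3")
      case True
      then have "pat g i 1 (g i 2) (g i 1)" using h False unfolding good2_def pat_def by auto
      then show ?thesis by blast
    next
      case F2: False
      then have "pat g i 2 (g i 1) (g i 2)" using h False unfolding good2_def pat_def by auto
      then show ?thesis by blast
    qed
  qed
qed

lemma pat_step:
  assumes "pat g q r a b" "good2 (g (q+1) 1) (g (q+1) 2) (g (q+1) 3)"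
   "good2 (g (q+1) 1) (g q 1) (g q 2)" "good2 (g (q+1) 1) (g q 1) (g q 3)"
   "good2 (g (q+1) 2) (g q 2) (g q 3)" "good2 (g (q+1) 2) (g q 2) (g q 1)"
   "good2 (g (q+1) 3) (g q 3) (g q 1)" "good2 (g (q+1) 3) (g q 3) (g q 2)"
  shows "pat g (q+1) r b a"
proof -
  have r: "r = 1 \<or> r = 2 \<or> r = 3" and ab: "a \<noteq> b" using assms(1) unfolding pat_def by auto
  from r show ?thesis
  proof (elim disjE)
    assume r1: "r = 1"
    then have "g q 1 = b" "g q 2 = a" "g q 3 = a" using assms(1) unfolding pat_def by auto
    then show ?thesis using r1 ab assms(2-) unfolding good2_def pat_def by auto
  next
    assume r1: "r = 2"
    then have "g q 1 = a" "g q 2 = b" "g q 3 = a" using assms(1) unfolding pat_def by auto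
    then show ?thesis using r1 ab assms(2-) unfolding good2_def pat_def by auto
  next
    assume r1: "r = 3"
    then have "g q 1 = a" "g q 2 = a" "g q 3 = b" using assms(1) unfolding pat_def by auto
    then show ?thesis using r1 ab assms(2-) unfolding good2_def pat_def by auto
  qed
qed





definition colf :: "nat \<Rightarrow> (nat \<Rightarrow> nat \<Rightarrow> nat) \<Rightarrow> (nat \<times> nat) option \<Rightarrow> nat" where
  "colf v c x = (case x of None \<Rightarrow> v | Some ip \<Rightarrow> c (fst ip) (snd ip))"

lemma suff:
  assumes n1: "n \<ge> 2"
  and T: "\<And>i. 1 \<le> i \<Longrightarrow> i \<le> n \<Longrightarrow> {Some(i,1),Some(i,2),Some(i,3)} \<noteq> e0 \<Longrightarrow> good2 (c i 1) (c i 2) (c i 3)"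
  and I: "\<And>q a d. 1 \<le> q \<Longrightarrow> q+1 \<le> n \<Longrightarrow> (a,d) \<in> {(1,2),(1,3),(2,3),(2,1),(3,1),(3,2)} \<Longrightarrow>
          {Some(q+1,a),Some(q,a),Some(q,d)} \<noteq> e0 \<Longrightarrow> good2 (c (q+1) a) (c q a) (c q d)"
  and N: "\<And>a d. (a,d) \<in> {(1,2),(2,3),(3,1)} \<Longrightarrow> {None, Some(1,a), Some(n,d)} \<noteq> e0 \<Longrightarrow> good2 v (c 1 a) (c n d)"
  shows "\<forall>e\<in>snd (Hk_ext n). e \<noteq> e0 \<longrightarrow> okE (colf v c) e"
proof (intro ballI impI)
  fix e assume e: "e \<in> snd (Hk_ext n)" "e \<noteq> e0"
  have n1': "n \<ge> 1" using n1 by simp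
  from e(1)[unfolded edges_iff[OF n1']] show "okE (colf v c) e"
  proof (elim disjE exE conjE)
    fix i assume i: "1 \<le> i" "i \<le> n" and ee: "e = {Some (i, 1), Some (i, 2), Some (i, 3)}"
    have "good2 (c i 1) (c i 2) (c i 3)" using T[OF i] ee e(2) by simp
    then show ?thesis unfolding ee by (subst card3_iff) (simp_all add: colf_def)
  next
    fix q assume q: "1 \<le> q" "q + 1 \<le> n" and "Iset q e"
    then show ?thesis unfolding Iset_def
    proof (elim disjE)
      assume ee: "e = {Some (q + 1, 1), Some (q, 1), Some (q, 2)}"
      have "good2 (c (q+1) 1) (c q 1) (c q 2)" using I[OF q, of 1 2] ee e(2) by simp
      then show ?thesis unfolding ee by (subst card3_iff) (simp_all add: colf_def)
    next
      assume ee: "e = {Some (q + 1, 1), Some (q, 1), Some (q, 3)}"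
      have "good2 (c (q+1) 1) (c q 1) (c q 3)" using I[OF q, of 1 3] ee e(2) by simp
      then show ?thesis unfolding ee by (subst card3_iff) (simp_all add: colf_def)
    next
      assume ee: "e = {Some (q + 1, 2), Some (q, 2), Some (q, 3)}"
      have "good2 (c (q+1) 2) (c q 2) (c q 3)" using I[OF q, of 2 3] ee e(2) by simp
      then show ?thesis unfolding ee by (subst card3_iff) (simp_all add: colf_def)
    next
      assume ee: "e = {Some (q + 1, 2), Some (q, 2), Some (q, 1)}"
      have "good2 (c (q+1) 2) (c q 2) (c q 1)" using I[OF q, of 2 1] ee e(2) by simp
      then show ?thesis unfolding ee by (subst card3_iff) (simp_all add: colf_def)
    next
      assume ee: "e = {Some (q + 1, 3), Some (q, 3), Some (q, 1)}"
      have "good2 (c (q+1) 3) (c q 3) (c q 1)" using I[OF q, of 3 1] ee e(2) by simp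
      then show ?thesis unfolding ee by (subst card3_iff) (simp_all add: colf_def)
    next
      assume ee: "e = {Some (q + 1, 3), Some (q, 3), Some (q, 2)}"
      have "good2 (c (q+1) 3) (c q 3) (c q 2)" using I[OF q, of 3 2] ee e(2) by simp
      then show ?thesis unfolding ee by (subst card3_iff) (simp_all add: colf_def)
    qed
  next
    assume ee: "e = {None, Some (1, 1), Some (n, 2)}"
    have "good2 v (c 1 1) (c n 2)" using N[of 1 2] ee e(2) by simp
    then show ?thesis unfolding ee using n1 by (subst card3_iff) (simp_all add: colf_def)
  next
    assume ee: "e = {None, Some (1, 2), Some (n, 3)}"
    have "good2 v (c 1 2) (c n 3)" using N[of 2 3] ee e(2) by simp
    then show ?thesis unfolding ee using n1 by (subst card3_iff) (simp_all add: colf_def)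
  next
    assume ee: "e = {None, Some (1, 3), Some (n, 1)}"
    have "good2 v (c 1 3) (c n 1)" using N[of 3 1] ee e(2) by simp
    then show ?thesis unfolding ee using n1 by (subst card3_iff) (simp_all add: colf_def)
  qed
qed




definition stdr :: "nat \<Rightarrow> nat \<Rightarrow> nat \<Rightarrow> nat" where
  "stdr r i p = (if (p = r) = odd i then 1 else 0)"

definition cC1 :: "nat \<Rightarrow> nat \<Rightarrow> nat \<Rightarrow> nat \<Rightarrow> nat \<Rightarrow> nat" where
  "cC1 q0 r1 s i p = (if i \<le> q0 then stdr r1 i p else (if (p = s) = even i then 1 else 0))"

lemma ad6: "(a,d) \<in> {(1,2),(1,3),(2,3),(2,1),(3,1),(3,2)} \<Longrightarrow>
   (a = 1 \<and> d = 2) \<or> (a = 1 \<and> d = 3) \<or> (a = 2 \<and> d = 3) \<or> (a = 2 \<and> d = 1) \<or> (a = 3 \<and> d = 1) \<or> (a = (3::nat) \<and> d = (2::nat))"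
  by simp

lemma ad3: "(a,d) \<in> {(1,2),(2,3),(3,1)} \<Longrightarrow>
   (a = 1 \<and> d = 2) \<or> (a = 2 \<and> d = 3) \<or> (a = (3::nat) \<and> d = (1::nat))"
  by simp

lemma C1:
  assumes n1: "n \<ge> 2" "even n" and q0: "1 \<le> q0" "q0 + 1 \<le> n"
  and rs: "(a0 = 1 \<and> s = 2 \<and> r1 = 3) \<or> (a0 = 2 \<and> s = 3 \<and> r1 = 1) \<or> (a0 = 3 \<and> s = 1 \<and> r1 = 2)"
  shows "\<forall>e\<in>snd (Hk_ext n). e \<noteq> {Some(q0+1,a0),Some(q0,a0),Some(q0,s)} \<longrightarrow> okE (colf 1 (cC1 q0 r1 s)) e"
proof (rule suff[OF n1(1)])
  fix i assume "1 \<le> i" "i \<le> n"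
  show "good2 (cC1 q0 r1 s i 1) (cC1 q0 r1 s i 2) (cC1 q0 r1 s i 3)"
    using rs by (elim disjE conjE; simp add: cC1_def stdr_def good2_def)
next
  fix q a d :: nat assume q: "1 \<le> q" "q+1 \<le> n" and ad: "(a,d) \<in> {(1,2),(1,3),(2,3),(2,1),(3,1),(3,2)}"
    and ne: "{Some(q+1,a),Some(q,a),Some(q,d)} \<noteq> {Some(q0+1,a0),Some(q0,a0),Some(q0,s)}"
  consider "q + 1 \<le> q0" | "q = q0" | "q > q0" by linarith
  then show "good2 (cC1 q0 r1 s (q+1) a) (cC1 q0 r1 s q a) (cC1 q0 r1 s q d)"
  proof cases
    case 1 then show ?thesis using ad6[OF ad] rs
      by (elim disjE conjE; cases "odd q"; simp add: cC1_def stdr_def good2_def)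
  next
    case 2
    have "\<not> (a = a0 \<and> d = s)" using ne 2 by auto
    then show ?thesis using ad6[OF ad] rs 2
      by (elim disjE conjE; cases "odd q"; simp add: cC1_def stdr_def good2_def)
  next
    case 3 then show ?thesis using ad6[OF ad] rs
      by (elim disjE conjE; cases "odd q"; simp add: cC1_def stdr_def good2_def)
  qed
next
  fix a d :: nat assume "(a,d) \<in> {(1,2),(2,3),(3,1)}"
  then show "good2 1 (cC1 q0 r1 s 1 a) (cC1 q0 r1 s n d)"
    using rs q0 n1 by (drule_tac ad3; elim disjE conjE; simp add: cC1_def stdr_def good2_def)
qed


definition cC2 :: "nat \<Rightarrow> nat \<Rightarrow> nat \<Rightarrow> nat \<Rightarrow> nat \<Rightarrow> nat" where
  "cC2 q0 r1 j0 i p = (if i \<le> q0 then stdr r1 i p else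
     (if odd q0 then (if (p = j0) = even i then 2 else 1) else (if (p = j0) = odd i then 2 else 0)))"

lemma C2:
  assumes n1: "n \<ge> 2" "even n" and q0: "1 \<le> q0" "q0 + 1 \<le> n"
  and rs: "(j0 = 1 \<and> r1 = 3) \<or> (j0 = 2 \<and> r1 = 1) \<or> (j0 = 3 \<and> r1 = 2)"
  shows "\<forall>e\<in>snd (Hk_ext n). e \<noteq> {Some(q0+1,j0),Some(q0,j0),Some(q0,r1)} \<longrightarrow>
     okE (colf (if odd q0 then 1 else 0) (cC2 q0 r1 j0)) e"
proof (rule suff[OF n1(1)])
  fix i assume "1 \<le> i" "i \<le> n"
  show "good2 (cC2 q0 r1 j0 i 1) (cC2 q0 r1 j0 i 2) (cC2 q0 r1 j0 i 3)"
    using rs by (elim disjE conjE; simp add: cC2_def stdr_def good2_def)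
next
  fix q a d :: nat assume q: "1 \<le> q" "q+1 \<le> n" and ad: "(a,d) \<in> {(1,2),(1,3),(2,3),(2,1),(3,1),(3,2)}"
    and ne: "{Some(q+1,a),Some(q,a),Some(q,d)} \<noteq> {Some(q0+1,j0),Some(q0,j0),Some(q0,r1)}"
  consider "q + 1 \<le> q0" | "q = q0" | "q > q0" by linarith
  then show "good2 (cC2 q0 r1 j0 (q+1) a) (cC2 q0 r1 j0 q a) (cC2 q0 r1 j0 q d)"
  proof cases
    case 1 then show ?thesis using ad6[OF ad] rs
      by (elim disjE conjE; cases "odd q"; simp add: cC2_def stdr_def good2_def)
  next
    case 2
    have "\<not> (a = j0 \<and> d = r1)" using ne 2 by auto
    then show ?thesis using ad6[OF ad] rs 2
      by (elim disjE conjE; cases "odd q"; simp add: cC2_def stdr_def good2_def)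
  next
    case 3 then show ?thesis using ad6[OF ad] rs
      by (elim disjE conjE; cases "odd q"; cases "odd q0"; simp add: cC2_def stdr_def good2_def)
  qed
next
  fix a d :: nat assume "(a,d) \<in> {(1,2),(2,3),(3,1)}"
  then show "good2 (if odd q0 then 1 else 0) (cC2 q0 r1 j0 1 a) (cC2 q0 r1 j0 n d)"
    using rs q0 n1 by (drule_tac ad3; elim disjE conjE; cases "odd q0"; simp add: cC2_def stdr_def good2_def)
qed

lemma A:
  assumes n1: "n \<ge> 2" "even n"
  and ad: "(a0 = 1 \<and> d0 = 2) \<or> (a0 = 2 \<and> d0 = 3) \<or> (a0 = 3 \<and> d0 = 1)"
  shows "\<forall>e\<in>snd (Hk_ext n). e \<noteq> {None, Some(1,a0), Some(n,d0)} \<longrightarrow>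
     okE (colf (if a0 = 1 then 1 else if a0 = 2 then 2 else 0) (stdr 1)) e"
proof (rule suff[OF n1(1)])
  fix i assume "1 \<le> i" "i \<le> n"
  show "good2 (stdr 1 i 1) (stdr 1 i 2) (stdr 1 i 3)"
    by (simp add: stdr_def good2_def)
next
  fix q a d :: nat assume q: "1 \<le> q" "q+1 \<le> n" and ad: "(a,d) \<in> {(1,2),(1,3),(2,3),(2,1),(3,1),(3,2)}"
  show "good2 (stdr 1 (q+1) a) (stdr 1 q a) (stdr 1 q d)"
    using ad6[OF ad] by (elim disjE conjE; cases "odd q"; simp add: stdr_def good2_def)
next
  fix a d :: nat assume "(a,d) \<in> {(1,2),(2,3),(3,1)}" and ne: "{None, Some(1,a), Some(n,d)} \<noteq> {None, Some(1,a0), Some(n,d0)}"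
  then have "\<not> (a = a0 \<and> d = d0)" by auto
  then show "good2 (if a0 = 1 then 1 else if a0 = 2 then 2 else 0) (stdr 1 1 a) (stdr 1 n d)"
    using ad n1 `(a,d) \<in> _` by (drule_tac ad3; elim disjE conjE; simp add: stdr_def good2_def)
qed

definition cB1 :: "nat \<Rightarrow> nat \<Rightarrow> nat \<Rightarrow> nat" where
  "cB1 n i p = (if i = n then 1 else stdr 1 i p)"

lemma B1:
  assumes n1: "n \<ge> 2" "even n"
  shows "\<forall>e\<in>snd (Hk_ext n). e \<noteq> {Some(n,1),Some(n,2),Some(n,3)} \<longrightarrow> okE (colf 0 (cB1 n)) e"
proof (rule suff[OF n1(1)])
  fix i assume "1 \<le> i" "i \<le> n" "{Some(i,1),Some(i,2),Some(i,3)} \<noteq> {Some(n,1),Some(n,2),Some(n,3)}"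
  then have "i \<noteq> n" by auto
  then show "good2 (cB1 n i 1) (cB1 n i 2) (cB1 n i 3)"
    by (simp add: cB1_def stdr_def good2_def)
next
  fix q a d :: nat assume q: "1 \<le> q" "q+1 \<le> n" and ad: "(a,d) \<in> {(1,2),(1,3),(2,3),(2,1),(3,1),(3,2)}"
  consider "q + 1 < n" | "q + 1 = n" using q by linarith
  then show "good2 (cB1 n (q+1) a) (cB1 n q a) (cB1 n q d)"
  proof cases
    case 1 then show ?thesis using ad6[OF ad] by (elim disjE conjE; cases "odd q"; simp add: cB1_def stdr_def good2_def)
  next
    case 2 
    then have "odd q" using n1 by auto
    then show ?thesis using ad6[OF ad] 2 by (elim disjE conjE; simp add: cB1_def stdr_def good2_def)
  qed
next
  fix a d :: nat assume "(a,d) \<in> {(1,2),(2,3),(3,1)}"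
  then show "good2 0 (cB1 n 1 a) (cB1 n n d)"
    using n1 by (drule_tac ad3; elim disjE conjE; simp add: cB1_def stdr_def good2_def)
qed




definition cB2 :: "nat \<Rightarrow> nat \<Rightarrow> nat \<Rightarrow> nat" where
  "cB2 i0 i p = (if i < i0 then stdr 1 i p else if i = i0 then 1 else
      (if odd i then (if p = 2 then 0 else 2) else (if p = 2 then 2 else 0)))"

lemma B2:
  assumes n1: "n \<ge> 2" "even n" and i0: "2 \<le> i0" "i0 < n" "even i0"
  shows "\<forall>e\<in>snd (Hk_ext n). e \<noteq> {Some(i0,1),Some(i0,2),Some(i0,3)} \<longrightarrow> okE (colf 2 (cB2 i0)) e"
proof (rule suff[OF n1(1)])
  fix i assume "1 \<le> i" "i \<le> n" "{Some(i,1),Some(i,2),Some(i,3)} \<noteq> {Some(i0,1),Some(i0,2),Some(i0,3)}"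
  then have "i \<noteq> i0" by auto
  then show "good2 (cB2 i0 i 1) (cB2 i0 i 2) (cB2 i0 i 3)"
    by (cases "odd i"; simp add: cB2_def stdr_def good2_def)
next
  fix q a d :: nat assume q: "1 \<le> q" "q+1 \<le> n" and ad: "(a,d) \<in> {(1,2),(1,3),(2,3),(2,1),(3,1),(3,2)}"
  consider "q + 1 < i0" | "q + 1 = i0" | "q = i0" | "q > i0" by linarith
  then show "good2 (cB2 i0 (q+1) a) (cB2 i0 q a) (cB2 i0 q d)"
  proof cases
    case 1 then show ?thesis using ad6[OF ad] by (elim disjE conjE; cases "odd q"; simp add: cB2_def stdr_def good2_def)
  next
    case 2 
    then have "odd q" using i0 by auto
    then show ?thesis using ad6[OF ad] 2 by (elim disjE conjE; simp add: cB2_def stdr_def good2_def)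
  next
    case 3
    then have "even q" using i0 by auto
    then show ?thesis using ad6[OF ad] 3 by (elim disjE conjE; simp add: cB2_def stdr_def good2_def)
  next
    case 4 then show ?thesis using ad6[OF ad] by (elim disjE conjE; cases "odd q"; simp add: cB2_def stdr_def good2_def)
  qed
next
  fix a d :: nat assume "(a,d) \<in> {(1,2),(2,3),(3,1)}"
  then show "good2 2 (cB2 i0 1 a) (cB2 i0 n d)"
    using n1 i0 by (drule_tac ad3; elim disjE conjE; simp add: cB2_def stdr_def good2_def)
qed

definition cB3 :: "nat \<Rightarrow> nat \<Rightarrow> nat \<Rightarrow> nat" where
  "cB3 i0 i p = (if i < i0 then stdr 1 i p else if i = i0 then 0 else
      (if even i then (if p = 2 then 1 else 2) else (if p = 2 then 2 else 1)))"

lemma B3: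
  assumes n1: "n \<ge> 2" "even n" and i0: "1 \<le> i0" "i0 \<le> n" "odd i0"
  shows "\<forall>e\<in>snd (Hk_ext n). e \<noteq> {Some(i0,1),Some(i0,2),Some(i0,3)} \<longrightarrow> okE (colf 0 (cB3 i0)) e"
proof (rule suff[OF n1(1)])
  fix i assume "1 \<le> i" "i \<le> n" "{Some(i,1),Some(i,2),Some(i,3)} \<noteq> {Some(i0,1),Some(i0,2),Some(i0,3)}"
  then have "i \<noteq> i0" by auto
  then show "good2 (cB3 i0 i 1) (cB3 i0 i 2) (cB3 i0 i 3)"
    by (cases "odd i"; simp add: cB3_def stdr_def good2_def)
next
  fix q a d :: nat assume q: "1 \<le> q" "q+1 \<le> n" and ad: "(a,d) \<in> {(1,2),(1,3),(2,3),(2,1),(3,1),(3,2)}"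
  consider "q + 1 < i0" | "q + 1 = i0" | "q = i0" | "q > i0" by linarith
  then show "good2 (cB3 i0 (q+1) a) (cB3 i0 q a) (cB3 i0 q d)"
  proof cases
    case 1 then show ?thesis using ad6[OF ad] by (elim disjE conjE; cases "odd q"; simp add: cB3_def stdr_def good2_def)
  next
    case 2 
    then have "even q" using i0 by auto
    then show ?thesis using ad6[OF ad] 2 by (elim disjE conjE; simp add: cB3_def stdr_def good2_def)
  next
    case 3
    then have "odd q" using i0 by auto
    then show ?thesis using ad6[OF ad] 3 by (elim disjE conjE; simp add: cB3_def stdr_def good2_def)
  next
    case 4 then show ?thesis using ad6[OF ad] by (elim disjE conjE; cases "odd q"; simp add: cB3_def stdr_def good2_def)
  qed
next
  fix a d :: nat assume "(a,d) \<in> {(1,2),(2,3),(3,1)}"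
  moreover have "i0 \<noteq> n" using i0 n1 by auto
  ultimately show "good2 0 (cB3 i0 1 a) (cB3 i0 n d)"
    using n1 i0 by (cases "i0 = 1"; drule_tac ad3; elim disjE conjE; simp add: cB3_def stdr_def good2_def)
qed




lemma key:
  assumes n1: "n \<ge> 2" "even n" and e0: "e0 \<in> snd (Hk_ext n)"
  shows "\<exists>f. \<forall>e\<in>snd (Hk_ext n). e \<noteq> e0 \<longrightarrow> okE f e"
proof -
  have n1': "n \<ge> 1" using n1 by simp
  from e0[unfolded edges_iff[OF n1']] show ?thesis
  proof (elim disjE exE conjE)
    fix i0 assume i0: "1 \<le> i0" "i0 \<le> n" and ee: "e0 = {Some (i0, 1), Some (i0, 2), Some (i0, 3)}"
    consider "i0 = n" | "i0 < n" "even i0" | "odd i0" using i0 by fastforce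
    then show ?thesis
    proof cases
      case 1
      have "\<forall>e\<in>snd (Hk_ext n). e \<noteq> e0 \<longrightarrow> okE (colf 0 (cB1 n)) e" using B1[OF n1] ee 1 by simp
      then show ?thesis by blast
    next
      case 2
      have h2: "2 \<le> i0" using i0 2 by (cases "i0 = 1") auto
      have "\<forall>e\<in>snd (Hk_ext n). e \<noteq> e0 \<longrightarrow> okE (colf 2 (cB2 i0)) e"
        using B2[OF n1 h2] 2 ee by simp
      then show ?thesis by blast
    next
      case 3
      have "\<forall>e\<in>snd (Hk_ext n). e \<noteq> e0 \<longrightarrow> okE (colf 0 (cB3 i0)) e"
        using B3[OF n1 i0] 3 ee by simp
      then show ?thesis by blast
    qed
  next
    fix q0 assume q0: "1 \<le> q0" "q0 + 1 \<le> n" and "Iset q0 e0"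
    then show ?thesis unfolding Iset_def
    proof (elim disjE)
      assume ee: "e0 = {Some (q0 + 1, 1), Some (q0, 1), Some (q0, 2)}"
      have "\<forall>e\<in>snd (Hk_ext n). e \<noteq> e0 \<longrightarrow> okE (colf 1 (cC1 q0 3 2)) e"
        unfolding ee by (rule C1[OF n1 q0]) simp
      then show ?thesis by blast
    next
      assume ee: "e0 = {Some (q0 + 1, 1), Some (q0, 1), Some (q0, 3)}"
      have "\<forall>e\<in>snd (Hk_ext n). e \<noteq> e0 \<longrightarrow> okE (colf (if odd q0 then 1 else 0) (cC2 q0 3 1)) e"
        unfolding ee by (rule C2[OF n1 q0]) simp
      then show ?thesis by blast
    next
      assume ee: "e0 = {Some (q0 + 1, 2), Some (q0, 2), Some (q0, 3)}"
      have "\<forall>e\<in>snd (Hk_ext n). e \<noteq> e0 \<longrightarrow> okE (colf 1 (cC1 q0 1 3)) e"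
        unfolding ee by (rule C1[OF n1 q0]) simp
      then show ?thesis by blast
    next
      assume ee: "e0 = {Some (q0 + 1, 2), Some (q0, 2), Some (q0, 1)}"
      have "\<forall>e\<in>snd (Hk_ext n). e \<noteq> e0 \<longrightarrow> okE (colf (if odd q0 then 1 else 0) (cC2 q0 1 2)) e"
        unfolding ee by (rule C2[OF n1 q0]) simp
      then show ?thesis by blast
    next
      assume ee: "e0 = {Some (q0 + 1, 3), Some (q0, 3), Some (q0, 1)}"
      have "\<forall>e\<in>snd (Hk_ext n). e \<noteq> e0 \<longrightarrow> okE (colf 1 (cC1 q0 2 1)) e"
        unfolding ee by (rule C1[OF n1 q0]) simp
      then show ?thesis by blast
    next
      assume ee: "e0 = {Some (q0 + 1, 3), Some (q0, 3), Some (q0, 2)}"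
      have "\<forall>e\<in>snd (Hk_ext n). e \<noteq> e0 \<longrightarrow> okE (colf (if odd q0 then 1 else 0) (cC2 q0 2 3)) e"
        unfolding ee by (rule C2[OF n1 q0]) simp
      then show ?thesis by blast
    qed
  next
    assume ee: "e0 = {None, Some (1, 1), Some (n, 2)}"
    have "\<forall>e\<in>snd (Hk_ext n). e \<noteq> e0 \<longrightarrow> okE (colf (if (1::nat) = 1 then 1 else if (1::nat) = 2 then 2 else 0) (stdr 1)) e"
      unfolding ee by (rule A[OF n1]) simp
    then show ?thesis by blast
  next
    assume ee: "e0 = {None, Some (1, 2), Some (n, 3)}"
    have "\<forall>e\<in>snd (Hk_ext n). e \<noteq> e0 \<longrightarrow> okE (colf (if (2::nat) = 1 then 1 else if (2::nat) = 2 then 2 else 0) (stdr 1)) e"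
      unfolding ee by (rule A[OF n1]) simp
    then show ?thesis by blast
  next
    assume ee: "e0 = {None, Some (1, 3), Some (n, 1)}"
    have "\<forall>e\<in>snd (Hk_ext n). e \<noteq> e0 \<longrightarrow> okE (colf (if (3::nat) = 1 then 1 else if (3::nat) = 2 then 2 else 0) (stdr 1)) e"
      unfolding ee by (rule A[OF n1]) simp
    then show ?thesis by blast
  qed
qed



lemma vx_norm: "j \<in> {1..3} \<Longrightarrow> vx i j = Some (i, j)"
  by (erule j3E) simp_all

lemma fst_iff: "x \<in> fst (Hk_ext n) \<longleftrightarrow> x = None \<or> (\<exists>i (p::nat). x = Some (i,p) \<and> 1 \<le> i \<and> i \<le> n \<and> p \<in> {1..3})"
proof -
  have "fst (Hk_ext n) = insert None {vx i j |i j. i \<in> {1..n} \<and> j \<in> {1..3}}"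
    unfolding Hk_ext_def Hk_def by simp
  also have "{vx i j |i j. i \<in> {1..n} \<and> j \<in> {1..3}} = {Some (i,p) |i (p::nat). i \<in> {1..n} \<and> p \<in> {1..3}}"
  proof (rule Collect_cong, rule iffI)
    fix x :: "(nat \<times> nat) option" assume "\<exists>i j. x = vx i j \<and> i \<in> {1..n} \<and> j \<in> {1..3}"
    then obtain i j where "x = vx i j" "i \<in> {1..n}" "j \<in> {1..3}" by blast
    then show "\<exists>i p. x = Some (i,p) \<and> i \<in> {1..n} \<and> p \<in> {1..3}" using vx_norm by blast
  next
    fix x :: "(nat \<times> nat) option" assume "\<exists>i p. x = Some (i,p) \<and> i \<in> {1..n} \<and> p \<in> {1..3}"
    then obtain i and j::nat where "x = Some (i,j)" "i \<in> {1..n}" "j \<in> {1..3}" by blast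
    then show "\<exists>i j. x = vx i j \<and> i \<in> {1..n} \<and> j \<in> {1..3}" using vx_norm by metis
  qed
  finally show ?thesis by auto
qed

lemma finV: "finite (fst (Hk_ext n))"
proof -
  have "fst (Hk_ext n) \<subseteq> insert None ((\<lambda>(i,p). Some (i,p)) ` ({1..n} \<times> {1..3}))"
    unfolding fst_iff by (auto simp: fst_iff)
  then show ?thesis by (rule finite_subset) simp
qed

lemma edge_props:
  assumes n1: "n \<ge> 2" and e: "e \<in> snd (Hk_ext n)"
  shows "e \<subseteq> fst (Hk_ext n) \<and> card e = 3"
proof -
  have n1': "n \<ge> 1" using n1 by simp
  have V: "Some (i,p) \<in> fst (Hk_ext n)" if "1 \<le> i" "i \<le> n" "p \<in> {1..3}" for i p
    unfolding fst_iff using that by blast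
  have V0: "None \<in> fst (Hk_ext n)" unfolding fst_iff by simp
  from e[unfolded edges_iff[OF n1']] show ?thesis
  proof (elim disjE exE conjE)
    fix i assume "1 \<le> i" "i \<le> n" "e = {Some (i, 1), Some (i, 2), Some (i, 3)}"
    then show ?thesis using V by simp
  next
    fix q assume q: "1 \<le> q" "q + 1 \<le> n" and "Iset q e"
    then show ?thesis unfolding Iset_def using V q by (elim disjE) simp_all
  qed (use V V0 n1 in simp_all)
qed

lemma bih: "n \<ge> 2 \<Longrightarrow> bihypergraph (Hk_ext n)"
  unfolding bihypergraph_def
proof (intro conjI ballI impI)
  assume n: "n \<ge> 2"
  show "finite (fst (Hk_ext n))" by (rule finV)
  fix e assume "e \<in> snd (Hk_ext n)"
  then show "e \<subseteq> fst (Hk_ext n)" using edge_props[OF n] by blast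
next
  fix e e' assume n: "n \<ge> 2" and e: "e \<in> snd (Hk_ext n)" "e' \<in> snd (Hk_ext n)" "e \<subseteq> e'"
  have c: "card e = 3" "card e' = 3" using edge_props[OF n] e by auto
  then have "finite e'" by (intro card_ge_0_finite) simp
  then show "e = e'" using card_subset_eq[OF _ e(3)] c by simp
qed



lemma uncol:
  assumes n2: "n \<ge> 2" and ev: "even n"
  shows "\<not> colorable (Hk_ext n)"
proof
  assume "colorable (Hk_ext n)"
  then obtain f where pf: "proper_coloring (Hk_ext n) f" unfolding colorable_def by blast
  define g where "g i p = f (Some (i,p))" for i p
  have n1: "n \<ge> 1" using n2 by simp
  have ok: "okE f e" if "e \<in> snd (Hk_ext n)" for e
    using pf that unfolding proper_coloring_def okE_def by blast
  have T: "good2 (g i 1) (g i 2) (g i 3)" if "1 \<le> i" "i \<le> n" for i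
    unfolding g_def by (rule card3_nec, rule ok, rule memT[OF that])
  have I: "good2 (g (q+1) 1) (g q 1) (g q 2) \<and> good2 (g (q+1) 1) (g q 1) (g q 3) \<and>
   good2 (g (q+1) 2) (g q 2) (g q 3) \<and> good2 (g (q+1) 2) (g q 2) (g q 1) \<and>
   good2 (g (q+1) 3) (g q 3) (g q 1) \<and> good2 (g (q+1) 3) (g q 3) (g q 2)" if "1 \<le> q" "q+1 \<le> n" for q
    unfolding g_def
    by (intro conjI; rule card3_nec, rule ok, rule memI[OF that], simp add: Iset_def)
  have N: "good2 (f None) (g 1 1) (g n 2) \<and> good2 (f None) (g 1 2) (g n 3) \<and> good2 (f None) (g 1 3) (g n 1)"
    unfolding g_def
    by (intro conjI; rule card3_nec, rule ok, rule memN[OF n1])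
  obtain r a b where p1: "pat g 1 r a b" using pat_ex[of g 1, OF T[of 1]] n1 by auto
  have ind: "pat g i r (if odd i then a else b) (if odd i then b else a)" if "1 \<le> i" "i \<le> n" for i
    using that
  proof (induction i)
    case 0 then show ?case by simp
  next
    case (Suc i)
    show ?case
    proof (cases "i = 0")
      case True then show ?thesis using p1 by simp
    next
      case False
      then have h: "pat g i r (if odd i then a else b) (if odd i then b else a)" using Suc by simp
      have "1 \<le> i" "i + 1 \<le> n" using False Suc.prems by auto
      from pat_step[OF h T[of "i+1"]] I[OF this]
      have "pat g (i+1) r (if odd i then b else a) (if odd i then a else b)" using Suc.prems by auto
      then show ?thesis by (cases "odd i") simp_all
    qed
  qed
  have pn: "pat g n r b a" using ind[of n] n1 ev by simp
  have r: "r = 1 \<or> r = 2 \<or> r = 3" and ab: "a \<noteq> b" using p1 unfolding pat_def by auto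
  from r show False
  proof (elim disjE)
    assume r1: "r = 1"
    then have "g 1 1 = b" "g 1 2 = a" "g 1 3 = a" "g n 1 = a" "g n 2 = b" "g n 3 = b"
      using p1 pn unfolding pat_def by auto
    then show False using N ab unfolding good2_def by auto
  next
    assume r1: "r = 2"
    then have "g 1 1 = a" "g 1 2 = b" "g 1 3 = a" "g n 1 = b" "g n 2 = a" "g n 3 = b"
      using p1 pn unfolding pat_def by auto
    then show False using N ab unfolding good2_def by auto
  next
    assume r1: "r = 3"
    then have "g 1 1 = a" "g 1 2 = a" "g 1 3 = b" "g n 1 = b" "g n 2 = b" "g n 3 = a"
      using p1 pn unfolding pat_def by auto
    then show False using N ab unfolding good2_def by auto
  qed
qed



lemma minimal:
  assumes n: "n \<ge> 2" "even n"
  and sub: "subhypergraph H' (Hk_ext n)" and ne: "H' \<noteq> Hk_ext n"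
  shows "colorable H'"
proof -
  have bH': "bihypergraph H'" and s1: "fst H' \<subseteq> fst (Hk_ext n)" and s2: "snd H' \<subseteq> snd (Hk_ext n)"
    using sub unfolding subhypergraph_def by auto
  have "\<exists>e0\<in>snd (Hk_ext n). e0 \<notin> snd H'"
  proof (rule ccontr)
    assume "\<not> ?thesis"
    then have eq: "snd H' = snd (Hk_ext n)" using s2 by blast
    have inE: "x \<in> fst H'" if "x \<in> e" "e \<in> snd (Hk_ext n)" for x e
      using bH' that eq unfolding bihypergraph_def by blast
    have "fst (Hk_ext n) \<subseteq> fst H'"
    proof
      fix x assume "x \<in> fst (Hk_ext n)"
      then have "x = None \<or> (\<exists>i (p::nat). x = Some (i,p) \<and> 1 \<le> i \<and> i \<le> n \<and> p \<in> {1..3})" by (simp add: fst_iff)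
      then show "x \<in> fst H'"
      proof (elim disjE exE conjE)
        assume "x = None" then show ?thesis using inE[OF _ memN(1)] n by simp
      next
        fix i p assume x: "x = Some (i,p)" "1 \<le> i" "i \<le> n" "p \<in> {1..3}"
        from x(4) have "x \<in> {Some(i,1),Some(i,2),Some(i,3)}" by (rule j3E) (simp_all add: x(1))
        then show ?thesis by (rule inE[OF _ memT[OF x(2,3)]])
      qed
    qed
    then have "fst H' = fst (Hk_ext n)" using s1 by (rule subset_antisym[rotated])
    then have "H' = Hk_ext n" using eq by (simp add: prod_eq_iff)
    then show False using ne by simp
  qed
  then obtain e0 where e0: "e0 \<in> snd (Hk_ext n)" "e0 \<notin> snd H'" by blast
  obtain f where f: "\<forall>e\<in>snd (Hk_ext n). e \<noteq> e0 \<longrightarrow> okE f e" using key[OF n e0(1)] by blast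
  have "proper_coloring H' f" unfolding proper_coloring_def
  proof
    fix e assume eH: "e \<in> snd H'"
    have "e \<in> snd (Hk_ext n)" using s2 eH by (rule subsetD)
    moreover have "e \<noteq> e0" using e0(2) eH by metis
    ultimately have "okE f e" using f by simp
    then show "1 < card (f ` e) \<and> card (f ` e) < card e" unfolding okE_def .
  qed
  then show ?thesis unfolding colorable_def by blast
qed


theorem mainTheorem17:
  fixes k :: nat
  assumes "k \<ge> 1"
  shows "minimal_uncolorable (Hk_ext (2 * k))"
proof -
  have n: "2 * k \<ge> 2" "even (2 * k)" using assms by auto
  show ?thesis unfolding minimal_uncolorable_def
    using bih[OF n(1)] uncol[OF n] minimal[OF n] by blast
qed


end
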